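(* For positive integers $n,m$, $H(n,m)=0$ if $m>n$, $H(n,m)=1$ if $m=n$, and $H(n,m)=1$ if $m=1$. In all other cases $n>m>1$, \[H(n,m)=\sum_{j=1}^{n-m}H(n-m,j)\binom{m-1}{j-1}.\]
   Context: A composition of a positive integer $n$ is an ordered tuple $(c_1,\ldots,c_m)$ of positive integers with $c_1+\cdots+c_m=n$; it has $m$ parts. It is headstrong if $c_1\ge c_i$ for all $i$. $H(n,m)$ denotes the number of headstrong compositions of $n$ with exactly $m$ parts. *)

theory Defs
  imports Main
begin

definition is_composition :: "nat \<Rightarrow> nat list \<Rightarrow> bool" where
  "is_composition n cs \<longleftrightarrow> (\<forall>c\<in>set cs. c > 0) \<and> sum_list cs = n"

definition headstrong :: "nat list \<Rightarrow> bool" where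
  "headstrong cs \<longleftrightarrow> cs \<noteq> [] \<and> (\<forall>i<length cs. cs ! 0 \<ge> cs ! i)"

definition H :: "nat \<Rightarrow> nat \<Rightarrow> nat" where
  "H n m = card {cs. is_composition n cs \<and> length cs = m \<and> headstrong cs}"

end

theory Submission
  imports Defs
begin

lemma headstrong_Cons: "headstrong (a # ys) \<longleftrightarrow> (\<forall>y\<in>set ys. y \<le> a)"
proof
  assume h: "headstrong (a # ys)"
  show "\<forall>y\<in>set ys. y \<le> a"
  proof
    fix y assume "y \<in> set ys"
    then obtain i where "i < length ys" "ys ! i = y" by (auto simp: in_set_conv_nth)
    with h show "y \<le> a" unfolding headstrong_def
      by (metis Suc_less_eq length_Cons nth_Cons_0 nth_Cons_Suc)
  qed
next
  assume h: "\<forall>y\<in>set ys. y \<le> a"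
  show "headstrong (a # ys)" unfolding headstrong_def
  proof (intro conjI allI impI)
    fix i assume "i < length (a # ys)"
    then show "(a # ys) ! i \<le> (a # ys) ! 0" using h
      by (cases i) auto
  qed simp
qed

lemma card_split_head:
  fixes A :: "nat list set"
  assumes "finite A" "finite C" "\<forall>xs\<in>A. xs \<noteq> [] \<and> hd xs \<in> C"
  shows "card A = (\<Sum>c\<in>C. card {ys. c # ys \<in> A})"
proof -
  have eq: "A = (\<Union>c\<in>C. Cons c ` {ys. c # ys \<in> A})"
  proof
    show "A \<subseteq> (\<Union>c\<in>C. Cons c ` {ys. c # ys \<in> A})"
    proof
      fix xs assume x: "xs \<in> A"
      then obtain c ys where "xs = c # ys" using assms(3) by (cases xs) auto
      then show "xs \<in> (\<Union>c\<in>C. Cons c ` {ys. c # ys \<in> A})" using x assms(3) by force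
    qed
  qed auto
  have fin: "finite {ys. c # ys \<in> A}" for c
  proof -
    have "{ys. c # ys \<in> A} \<subseteq> tl ` A" by force
    then show ?thesis using assms(1) finite_surj by blast
  qed
  have "card A = (\<Sum>c\<in>C. card (Cons c ` {ys. c # ys \<in> A}))"
    by (subst eq, rule card_UN_disjoint) (use assms(2) fin in auto)
  also have "\<dots> = (\<Sum>c\<in>C. card {ys. c # ys \<in> A})"
    by (rule sum.cong) (auto simp: card_image)
  finally show ?thesis .
qed

lemma fin_lists: "finite {ys :: nat list. length ys = r \<and> sum_list ys = k \<and> R ys}"
proof -
  have "{ys :: nat list. length ys = r \<and> sum_list ys = k \<and> R ys} \<subseteq> {ys. set ys \<subseteq> {0..k} \<and> length ys = r}"
    using member_le_sum_list by fastforce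
  moreover have "finite {ys. set ys \<subseteq> {0..k::nat} \<and> length ys = r}"
    by (rule finite_lists_length_eq) simp
  ultimately show ?thesis by (rule finite_subset)
qed

definition Pn :: "nat \<Rightarrow> nat \<Rightarrow> nat \<Rightarrow> nat" where
  "Pn k r b = card {ys. length ys = r \<and> sum_list ys = k \<and> (\<forall>y\<in>set ys. y \<le> b)}"
definition Qn :: "nat \<Rightarrow> nat \<Rightarrow> nat \<Rightarrow> nat" where
  "Qn k j b = card {ys. length ys = j \<and> sum_list ys = k \<and> (\<forall>y\<in>set ys. 0 < y \<and> y \<le> b)}"
definition W :: "nat \<Rightarrow> nat \<Rightarrow> nat" where
  "W k m = card {xs. length xs = m \<and> sum_list xs = k \<and> headstrong xs}"

lemma Pn_0: "Pn k 0 b = (if k = 0 then 1 else 0)"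
proof -
  have "{ys. length ys = 0 \<and> sum_list ys = k \<and> (\<forall>y\<in>set ys. y \<le> b)} = (if k = 0 then {[]} else {})"
    by auto
  then show ?thesis unfolding Pn_def by simp
qed

lemma Qn_0: "Qn k 0 b = (if k = 0 then 1 else 0)"
proof -
  have "{ys. length ys = 0 \<and> sum_list ys = k \<and> (\<forall>y\<in>set ys. 0 < y \<and> y \<le> b)} = (if k = 0 then {[]} else {})"
    by auto
  then show ?thesis unfolding Qn_def by simp
qed

lemma Pn_Suc: "Pn k (Suc r) b = (\<Sum>c\<in>{0..min b k}. Pn (k - c) r b)"
proof -
  have "Pn k (Suc r) b = (\<Sum>c\<in>{0..min b k}. card {ys. c # ys \<in> {ys. length ys = Suc r \<and> sum_list ys = k \<and> (\<forall>y\<in>set ys. y \<le> b)}})"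
    unfolding Pn_def
    by (rule card_split_head[OF fin_lists]) (auto simp: fin_lists length_Suc_conv)
  also have "\<dots> = (\<Sum>c\<in>{0..min b k}. Pn (k - c) r b)"
    unfolding Pn_def by (rule sum.cong) (auto intro!: arg_cong[where f=card])
  finally show ?thesis .
qed

lemma Qn_Suc: "Qn k (Suc j) b = (\<Sum>c\<in>{1..min b k}. Qn (k - c) j b)"
proof -
  have "Qn k (Suc j) b = (\<Sum>c\<in>{1..min b k}. card {ys. c # ys \<in> {ys. length ys = Suc j \<and> sum_list ys = k \<and> (\<forall>y\<in>set ys. 0 < y \<and> y \<le> b)}})"
    unfolding Qn_def
    by (rule card_split_head[OF fin_lists]) (auto simp: fin_lists length_Suc_conv)
  also have "\<dots> = (\<Sum>c\<in>{1..min b k}. Qn (k - c) j b)"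
    unfolding Qn_def by (rule sum.cong) (auto intro!: arg_cong[where f=card])
  finally show ?thesis .
qed

lemma W_Suc: "W k (Suc r) = (\<Sum>a\<in>{0..k}. Pn (k - a) r a)"
proof -
  have "W k (Suc r) = (\<Sum>a\<in>{0..k}. card {ys. a # ys \<in> {xs. length xs = Suc r \<and> sum_list xs = k \<and> headstrong xs}})"
    unfolding W_def
    by (rule card_split_head[OF fin_lists]) (auto simp: fin_lists length_Suc_conv)
  also have "\<dots> = (\<Sum>a\<in>{0..k}. Pn (k - a) r a)"
    unfolding Pn_def by (rule sum.cong) (auto simp: headstrong_Cons intro!: arg_cong[where f=card])
  finally show ?thesis .
qed

lemma H_Suc: "H k (Suc j) = (\<Sum>a\<in>{1..k}. Qn (k - a) j a)"
proof -
  have "H k (Suc j) = (\<Sum>a\<in>{1..k}. card {ys. a # ys \<in> {cs. is_composition k cs \<and> length cs = Suc j \<and> headstrong cs}})"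
    unfolding H_def
    by (rule card_split_head, rule finite_subset[OF _ fin_lists[of "Suc j" k "\<lambda>_. True"]])
       (auto simp: is_composition_def simp: fin_lists length_Suc_conv)
  also have "\<dots> = (\<Sum>a\<in>{1..k}. Qn (k - a) j a)"
    unfolding Qn_def is_composition_def
    by (rule sum.cong) (auto simp: headstrong_Cons intro!: arg_cong[where f=card])
  finally show ?thesis .
qed

lemma len_le_sum: "(\<forall>c\<in>set cs. (0::nat) < c) \<Longrightarrow> length cs \<le> sum_list cs"
  by (induction cs) auto

lemma Qn_zero: "k < j \<Longrightarrow> Qn k j b = 0"
proof -
  assume "k < j"
  have False if "length ys = j" "sum_list ys = k" "\<forall>y\<in>set ys. 0 < y \<and> y \<le> b" for ys
  proof -
    have "length ys \<le> sum_list ys" using that(3) len_le_sum by blast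
    then show False using that \<open>k < j\<close> by simp
  qed
  then have e: "{ys. length ys = j \<and> sum_list ys = k \<and> (\<forall>y\<in>set ys. 0 < y \<and> y \<le> b)} = {}"
    by blast
  show ?thesis unfolding Qn_def e by simp
qed

lemma sum_zero: "(\<forall>y\<in>set ys. y \<le> (0::nat)) \<Longrightarrow> sum_list ys = 0"
  by (induction ys) auto

lemma Pn_zero_b: "0 < k \<Longrightarrow> Pn k r 0 = 0"
proof -
  assume "0 < k"
  have False if "sum_list ys = k" "\<forall>y\<in>set ys. y \<le> (0::nat)" for ys
    using sum_zero[OF that(2)] that(1) \<open>0 < k\<close> by simp
  then have e: "{ys. length ys = r \<and> sum_list ys = k \<and> (\<forall>y\<in>set ys. y \<le> (0::nat))} = {}"
    by blast
  show ?thesis unfolding Pn_def e by simp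
qed

lemma Pn_Qn: "Pn k r b = (\<Sum>j\<le>r. Qn k j b * (r choose j))"
proof (induction r arbitrary: k)
  case 0
  then show ?case by (simp add: Pn_0 Qn_0)
next
  case (Suc r)
  have "Pn k (Suc r) b = (\<Sum>c\<in>{0..min b k}. Pn (k - c) r b)" by (rule Pn_Suc)
  also have "\<dots> = Pn k r b + (\<Sum>c\<in>{1..min b k}. Pn (k - c) r b)"
  proof -
    have "{0..min b k} = insert 0 {1..min b k}" by auto
    then show ?thesis by simp
  qed
  also have "(\<Sum>c\<in>{1..min b k}. Pn (k - c) r b) = (\<Sum>c\<in>{1..min b k}. \<Sum>j\<le>r. Qn (k - c) j b * (r choose j))"
    using Suc.IH by simp
  also have "\<dots> = (\<Sum>j\<le>r. (\<Sum>c\<in>{1..min b k}. Qn (k - c) j b) * (r choose j))"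
    by (subst sum.swap) (simp add: sum_distrib_right)
  also have "\<dots> = (\<Sum>j\<le>r. Qn k (Suc j) b * (r choose j))"
    by (simp add: Qn_Suc)
  finally have A: "Pn k (Suc r) b = (\<Sum>j\<le>r. Qn k j b * (r choose j)) + (\<Sum>j\<le>r. Qn k (Suc j) b * (r choose j))"
    using Suc.IH by simp
  have B: "(\<Sum>j\<le>r. Qn k j b * (r choose j)) = Qn k 0 b + (\<Sum>j\<le>r. Qn k (Suc j) b * (r choose Suc j))"
  proof -
    have B1: "(\<Sum>j\<le>Suc r. Qn k j b * (r choose j)) = (\<Sum>j\<le>r. Qn k j b * (r choose j))"
      by (simp add: binomial_eq_0)
    have B2: "(\<Sum>j\<le>Suc r. Qn k j b * (r choose j)) = Qn k 0 b + (\<Sum>j\<le>r. Qn k (Suc j) b * (r choose Suc j))"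
      by (subst sum.atMost_Suc_shift) simp
    show ?thesis by (rule trans[OF B1[symmetric] B2])
  qed
  have C: "(\<Sum>j\<le>Suc r. Qn k j b * (Suc r choose j)) = Qn k 0 b + (\<Sum>j\<le>r. Qn k (Suc j) b * (r choose j)) + (\<Sum>j\<le>r. Qn k (Suc j) b * (r choose Suc j))"
    by (subst sum.atMost_Suc_shift) (simp add: algebra_simps sum.distrib)
  show ?case using A B C by simp
qed

lemma H_W: "m \<le> n \<Longrightarrow> H n m = W (n - m) m"
proof -
  assume mn: "m \<le> n"
  let ?S = "{xs. length xs = m \<and> sum_list xs = n - m \<and> headstrong xs}"
  have eq: "{cs. is_composition n cs \<and> length cs = m \<and> headstrong cs} = map Suc ` ?S"
  proof
    show "map Suc ` ?S \<subseteq> {cs. is_composition n cs \<and> length cs = m \<and> headstrong cs}"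
    proof
      fix cs assume "cs \<in> map Suc ` ?S"
      then obtain xs where xs: "xs \<in> ?S" "cs = map Suc xs" by blast
      have "sum_list (map Suc xs) = sum_list xs + length xs"
        by (induction xs) auto
      moreover have "headstrong (map Suc xs)" using xs(1) unfolding headstrong_def by auto
      ultimately show "cs \<in> {cs. is_composition n cs \<and> length cs = m \<and> headstrong cs}"
        using xs mn by (auto simp: is_composition_def)
    qed
  next
    show "{cs. is_composition n cs \<and> length cs = m \<and> headstrong cs} \<subseteq> map Suc ` ?S"
    proof
      fix cs assume cs: "cs \<in> {cs. is_composition n cs \<and> length cs = m \<and> headstrong cs}"
      let ?xs = "map (\<lambda>c. c - 1) cs"
      have pos: "\<forall>c\<in>set cs. 0 < c" using cs by (auto simp: is_composition_def)
      then have "cs = map Suc ?xs" by (induction cs) auto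
      moreover have "sum_list cs = sum_list ?xs + length ?xs"
        using pos by (induction cs) auto
      moreover have "headstrong ?xs" using cs pos unfolding headstrong_def
        by (auto simp: diff_le_mono)
      ultimately show "cs \<in> map Suc ` ?S" using cs
        by (intro image_eqI[where x="?xs"]) (auto simp: is_composition_def)
    qed
  qed
  have "inj (map Suc)" by (simp add: inj_mapI)
  then have "card (map Suc ` ?S) = card ?S" by (rule card_image[OF inj_on_subset[OF _ subset_UNIV]])
  then show ?thesis unfolding H_def W_def using eq by simp
qed

theorem mainTheorem10:
  fixes n m :: nat
  assumes "n > 0" and "m > 0"
  shows "(m > n \<longrightarrow> H n m = 0)
       \<and> (m = n \<longrightarrow> H n m = 1)
       \<and> (m = 1 \<longrightarrow> H n m = 1)
       \<and> (n > m \<and> m > 1 \<longrightarrow> H n m = (\<Sum>j=1..n-m. H (n-m) j * ((m-1) choose (j-1))))"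
proof (intro conjI impI)
  assume "m > n"
  then have e: "{cs. is_composition n cs \<and> length cs = m \<and> headstrong cs} = {}"
    using len_le_sum by (fastforce simp: is_composition_def)
  show "H n m = 0" unfolding H_def e by simp
next
  assume mn: "m = n"
  have "{xs. length xs = n \<and> sum_list xs = 0 \<and> headstrong xs} = {replicate n 0}"
  proof
    show "{xs. length xs = n \<and> sum_list xs = 0 \<and> headstrong xs} \<subseteq> {replicate n 0}"
      by (auto simp: sum_list_eq_0_iff intro: replicate_eqI)
    show "{replicate n 0} \<subseteq> {xs. length xs = n \<and> sum_list xs = 0 \<and> headstrong xs}"
      using assms(1) by (auto simp: headstrong_def)
  qed
  then show "H n m = 1" using H_W[of m n] mn unfolding W_def by simp
next
  assume m1: "m = 1"
  have "{xs. length xs = 1 \<and> sum_list xs = n - 1 \<and> headstrong xs} = {[n - 1]}"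
    by (auto simp: headstrong_def length_Suc_conv)
  then show "H n m = 1" using H_W[of m n] m1 assms unfolding W_def by simp
next
  assume a: "n > m \<and> m > 1"
  define k where "k = n - m"
  define r where "r = m - 1"
  have k0: "k > 0" and mr: "m = Suc r" using a by (auto simp: k_def r_def)
  have "H n m = W k (Suc r)" using H_W[of m n] a mr by (simp add: k_def)
  also have "\<dots> = (\<Sum>a\<in>{0..k}. Pn (k - a) r a)" by (rule W_Suc)
  also have "\<dots> = (\<Sum>a\<in>{1..k}. Pn (k - a) r a)"
  proof -
    have "{0..k} = insert 0 {1..k}" by auto
    then show ?thesis using Pn_zero_b[OF k0] by simp
  qed
  also have "\<dots> = (\<Sum>a\<in>{1..k}. \<Sum>j<k. Qn (k - a) j a * (r choose j))"
  proof (rule sum.cong[OF refl])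
    fix a assume aa: "a \<in> {1..k}"
    have "(\<Sum>j\<le>r. Qn (k - a) j a * (r choose j)) = (\<Sum>j\<le>k + r. Qn (k - a) j a * (r choose j))"
      by (rule sum.mono_neutral_left) auto
    also have "\<dots> = (\<Sum>j<k. Qn (k - a) j a * (r choose j))"
      using aa by (intro sum.mono_neutral_right) (auto simp: Qn_zero)
    finally show "Pn (k - a) r a = (\<Sum>j<k. Qn (k - a) j a * (r choose j))"
      by (simp add: Pn_Qn)
  qed
  also have "\<dots> = (\<Sum>j<k. H k (Suc j) * (r choose j))"
    by (subst sum.swap) (simp add: H_Suc sum_distrib_right)
  also have "\<dots> = (\<Sum>j=1..k. H k j * (r choose (j - 1)))"
  proof -
    have "(\<Sum>j=1..k. H k j * (r choose (j - 1))) = (\<Sum>j=Suc 0..Suc (k - 1). H k j * (r choose (j - 1)))"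
      using k0 by simp
    also have "\<dots> = (\<Sum>j=0..k - 1. H k (Suc j) * (r choose j))"
      by (subst sum.shift_bounds_cl_Suc_ivl) simp
    also have "\<dots> = (\<Sum>j<k. H k (Suc j) * (r choose j))"
      using k0 by (intro sum.cong) auto
    finally show ?thesis by simp
  qed
  finally show "H n m = (\<Sum>j=1..n-m. H (n-m) j * ((m-1) choose (j-1)))"
    by (simp add: k_def r_def)
qed

end
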